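(* For every $n\ge1$, $\mathbb E[|C(X_1^n)|]\le\frac32n$, with equality if and only if $n=1$. That is, $\mathbb E[|C(X_1)|]=\frac32$ and $\mathbb E[|C(X_1^n)|]<\frac32 n$ for all $n\ge2$.
   Context: Let $\mathcal X=\{A,B,C,D\}$ and let $(X_i)_{i\ge1}$ be the first-order Markov chain on $\mathcal X$ with $\mathbb P(X_1=x)=1/4$ for all $x$ and transitions: from $A$ to $A$ or $C$ w.p. $1/2$ each; from $B$ to $B$ or $D$ w.p. $1/2$ each; from $C$ and from $D$ to each of $A,B,C,D$ w.p. $1/4$. A nonempty string is admissible if all consecutive transitions have positive probability; $\mathcal A$ is the set of admissible nonempty strings; $K(u):=-\log_2\mathbb P(X_1^m=u)$ for $u=x_1^m\in\mathcal A$. Shortlex source code $C:\mathcal A\to\{0,1\}^+$: order nonempty binary strings by length then lexicographically as $b_1,b_2,\dots$; order $\mathcal A$ as $u_1,u_2,\dots$ by increasing $K$, then increasing length, then lexicographically with $A<B<C<D$; set $C(u_j):=b_j$ (the code $C$ is distinct from the symbol $C$). $|w|$ is the length of a binary string $w$. *)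

theory Defs
  imports Complex_Main
begin

datatype sym = A | B | C | D

definition sym_idx :: "sym \<Rightarrow> nat" where
  "sym_idx x = (case x of A \<Rightarrow> 0 | B \<Rightarrow> 1 | C \<Rightarrow> 2 | D \<Rightarrow> 3)"

definition trans_p :: "sym \<Rightarrow> sym \<Rightarrow> real" where
  "trans_p x y = (case x of
      A \<Rightarrow> (if y = A \<or> y = C then 1/2 else 0)
    | B \<Rightarrow> (if y = B \<or> y = D then 1/2 else 0)
    | C \<Rightarrow> 1/4
    | D \<Rightarrow> 1/4)"

fun path_prob :: "sym \<Rightarrow> sym list \<Rightarrow> real" where
  "path_prob x [] = 1"
| "path_prob x (y # ys) = trans_p x y * path_prob y ys"

fun str_prob :: "sym list \<Rightarrow> real" where
  "str_prob [] = 1"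
| "str_prob (x # xs) = 1/4 * path_prob x xs"

definition admissible :: "sym list \<Rightarrow> bool" where
  "admissible u \<longleftrightarrow> u \<noteq> [] \<and>
     (\<forall>i. Suc i < length u \<longrightarrow> trans_p (u ! i) (u ! Suc i) > 0)"

definition K :: "sym list \<Rightarrow> real" where
  "K u = - log 2 (str_prob u)"

definition src_less :: "sym list \<Rightarrow> sym list \<Rightarrow> bool" where
  "src_less u v \<longleftrightarrow> K u < K v \<or>
     (K u = K v \<and> (length u < length v \<or>
        (length u = length v \<and> (u, v) \<in> lexord {(a, b). sym_idx a < sym_idx b})))"

definition bin_less :: "bool list \<Rightarrow> bool list \<Rightarrow> bool" where
  "bin_less w z \<longleftrightarrow> length w < length z \<or>
     (length w = length z \<and> (w, z) \<in> lexord {(False, True)})"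

text \<open>Shortlex source code: u_j (j-th admissible string) is mapped to b_j
  (j-th nonempty binary string); j-1 = number of strictly smaller elements.\<close>
definition code :: "sym list \<Rightarrow> bool list" where
  "code u = (THE w. w \<noteq> [] \<and>
     card {z. z \<noteq> [] \<and> bin_less z w} = card {v. admissible v \<and> src_less v u})"

definition expected_len :: "nat \<Rightarrow> real" where
  "expected_len n = (\<Sum>u\<in>{u::sym list. length u = n}. str_prob u * real (length (code u)))"

end

theory Submission
  imports Defs
begin


lemma UNIV_sym: "(UNIV::sym set) = {A,B,C,D}"
  using sym.exhaust by auto

lemma finite_sym: "finite (UNIV::sym set)"
  by (simp add: UNIV_sym)

definition isCD :: "sym \<Rightarrow> bool" where "isCD x \<longleftrightarrow> x = C \<or> x = D"
definition dc :: "sym list \<Rightarrow> nat" where "dc u = length (filter isCD (butlast u))"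

lemma adm_single[simp]: "admissible [x]"
  by (simp add: admissible_def)

lemma adm_cons2: "admissible (x # y # ys) \<longleftrightarrow> trans_p x y > 0 \<and> admissible (y # ys)"
proof
  assume h: "admissible (x # y # ys)"
  have "Suc 0 < length (x # y # ys)" by simp
  then have "trans_p ((x # y # ys) ! 0) ((x # y # ys) ! Suc 0) > 0" using h unfolding admissible_def by blast
  then have "trans_p x y > 0" by simp
  moreover have "admissible (y # ys)" unfolding admissible_def
  proof (intro conjI allI impI)
    fix i assume "Suc i < length (y # ys)"
    then have "Suc (Suc i) < length (x # y # ys)" by simp
    then have "trans_p ((x#y#ys) ! Suc i) ((x#y#ys) ! Suc (Suc i)) > 0" using h unfolding admissible_def by blast
    then show "trans_p ((y # ys) ! i) ((y # ys) ! Suc i) > 0" by simp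
  qed simp
  ultimately show "trans_p x y > 0 \<and> admissible (y # ys)" by blast
next
  assume h: "trans_p x y > 0 \<and> admissible (y # ys)"
  show "admissible (x # y # ys)" unfolding admissible_def
  proof (intro conjI allI impI)
    fix i assume i: "Suc i < length (x # y # ys)"
    show "trans_p ((x # y # ys) ! i) ((x # y # ys) ! Suc i) > 0"
    proof (cases i)
      case 0 then show ?thesis using h by simp
    next
      case (Suc j)
      then have "Suc j < length (y # ys)" using i by simp
      then show ?thesis using h Suc unfolding admissible_def by simp
    qed
  qed simp
qed

lemma trans_pos: "trans_p x y > 0 \<Longrightarrow> trans_p x y = (if isCD x then 1/4 else 1/2)"
  by (cases x; cases y; simp add: trans_p_def isCD_def)

lemma dc_cons2: "dc (x # y # ys) = (if isCD x then 1 else 0) + dc (y # ys)"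
  by (simp add: dc_def)

lemma dc_single[simp]: "dc [x] = 0" by (simp add: dc_def)

lemma path_prob_eq: "path_prob x w = (if admissible (x # w) then (1/2::real) ^ (length w + dc (x # w)) else 0)"
proof (induction w arbitrary: x)
  case Nil then show ?case by simp
next
  case (Cons y ys)
  show ?case
  proof (cases "trans_p x y > 0")
    case True
    have t: "trans_p x y = (if isCD x then 1/4 else 1/2)" using trans_pos[OF True] .
    have a: "admissible (x # y # ys) = admissible (y # ys)" using True by (simp add: adm_cons2)
    have p: "path_prob x (y # ys) = trans_p x y * path_prob y ys" by simp
    show ?thesis
    proof (cases "admissible (y # ys)")
      case False then show ?thesis using a p Cons.IH[of y] by simp
    next
      case adm: True
      show ?thesis
      proof (cases "isCD x")
        case True
        then show ?thesis using a p Cons.IH[of y] adm t by (simp add: dc_cons2 power_add)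
      next
        case False
        then show ?thesis using a p Cons.IH[of y] adm t by (simp add: dc_cons2 power_add)
      qed
    qed
  next
    case False
    then have "trans_p x y = 0" by (cases x; cases y; simp add: trans_p_def)
    then show ?thesis using False by (simp add: adm_cons2)
  qed
qed

lemma str_prob_eq: "u \<noteq> [] \<Longrightarrow> str_prob u = (if admissible u then (1/2::real) ^ (length u + 1 + dc u) else 0)"
  by (cases u) (auto simp: path_prob_eq power_add)

lemma K_eq: "admissible u \<Longrightarrow> K u = real (length u + 1 + dc u)"
proof -
  assume a: "admissible u"
  define j where "j = length u + 1 + dc u"
  have "u \<noteq> []" using a by (simp add: admissible_def)
  then have "str_prob u = (1/2) ^ j" using a str_prob_eq j_def by simp
  also have "\<dots> = inverse (2 ^ j)" by (simp add: power_one_over inverse_eq_divide)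
  finally have e: "str_prob u = inverse (2 ^ j)" .
  have "K u = - log 2 (inverse (2 ^ j))" unfolding K_def e by simp
  also have "\<dots> = log 2 (2 ^ j)" by (simp only: log_inverse minus_minus)
  also have "\<dots> = real j" by simp
  finally show ?thesis unfolding j_def .
qed



lemma finite_len: "finite {w::sym list. length w = m}"
  using finite_lists_length_eq[OF finite_sym, of m] by simp

definition cntF :: "sym \<Rightarrow> nat \<Rightarrow> nat \<Rightarrow> nat" where
  "cntF x m d = card {w. length w = m \<and> admissible (x # w) \<and> dc (x # w) = d}"

definition succs :: "sym \<Rightarrow> sym set" where "succs x = {y. trans_p x y > 0}"

lemma succs_A: "succs A = {A, C}" unfolding succs_def using sym.exhaust by (auto simp: trans_p_def)
lemma succs_B: "succs B = {B, D}" unfolding succs_def using sym.exhaust by (auto simp: trans_p_def)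
lemma succs_C: "succs C = {A, B, C, D}" unfolding succs_def using sym.exhaust by (auto simp: trans_p_def)
lemma succs_D: "succs D = {A, B, C, D}" unfolding succs_def using sym.exhaust by (auto simp: trans_p_def)

lemma cntF_0: "cntF x 0 d = (if d = 0 then 1 else 0)"
proof -
  have "{w::sym list. length w = 0 \<and> admissible (x # w) \<and> dc (x # w) = d} = (if d = 0 then {[]} else {})"
    by auto
  then show ?thesis unfolding cntF_def by simp
qed

lemma cntF_Suc: "cntF x (Suc m) d =
   (\<Sum>y\<in>succs x. if (if isCD x then 1 else 0) \<le> d then cntF y m (d - (if isCD x then 1 else 0)) else 0)"
proof -
  define e where "e = (if isCD x then 1 else 0::nat)"
  define S where "S y = {w. length w = m \<and> admissible (y # w) \<and> dc (y # w) + e = d}" for y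
  have eq: "{w. length w = Suc m \<and> admissible (x # w) \<and> dc (x # w) = d} = (\<Union>y\<in>succs x. (Cons y) ` S y)"
  proof (rule set_eqI)
    fix w
    show "w \<in> {w. length w = Suc m \<and> admissible (x # w) \<and> dc (x # w) = d} \<longleftrightarrow> w \<in> (\<Union>y\<in>succs x. (Cons y) ` S y)"
    proof (cases w)
      case Nil then show ?thesis by (auto simp: S_def)
    next
      case (Cons y ys)
      then show ?thesis by (auto simp: S_def succs_def adm_cons2 dc_cons2 e_def)
    qed
  qed
  have fin: "finite (S y)" for y
    by (rule finite_subset[OF _ finite_len[of m]]) (auto simp: S_def)
  have "card (\<Union>y\<in>succs x. (Cons y) ` S y) = (\<Sum>y\<in>succs x. card ((Cons y) ` S y))"
    by (rule card_UN_disjoint) (auto simp: fin finite_sym intro: finite_subset[OF _ finite_sym])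
  also have "\<dots> = (\<Sum>y\<in>succs x. card (S y))"
    by (rule sum.cong) (auto simp: card_image)
  also have "\<dots> = (\<Sum>y\<in>succs x. if e \<le> d then cntF y m (d - e) else 0)"
  proof (rule sum.cong)
    fix y
    show "card (S y) = (if e \<le> d then cntF y m (d - e) else 0)"
    proof (cases "e \<le> d")
      case True
      then have "S y = {w. length w = m \<and> admissible (y # w) \<and> dc (y # w) = d - e}" unfolding S_def by auto
      then show ?thesis using True by (simp add: cntF_def)
    next
      case False
      then have "S y = {}" unfolding S_def by auto
      then show ?thesis using False by simp
    qed
  qed simp
  finally show ?thesis unfolding cntF_def eq e_def .
qed

definition fa :: "nat \<Rightarrow> nat \<Rightarrow> nat" where
  "fa m d = (if m = 0 then (if d = 0 then 1 else 0) else 2 ^ (d+1) * ((m - 1) choose d))"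
definition fc :: "nat \<Rightarrow> nat \<Rightarrow> nat" where
  "fc m d = (if m = 0 then (if d = 0 then 1 else 0) else if d = 0 then 0 else 2 ^ (d+1) * ((m - 1) choose (d - 1)))"

lemma isCD_simps[simp]: "isCD A = False" "isCD B = False" "isCD C = True" "isCD D = True"
  by (auto simp: isCD_def)

lemma cntF_closed: "cntF A m d = fa m d \<and> cntF B m d = fa m d \<and> cntF C m d = fc m d \<and> cntF D m d = fc m d"
proof (induction m arbitrary: d)
  case 0 then show ?case by (simp add: cntF_0 fa_def fc_def)
next
  case (Suc m)
  have a: "cntF A (Suc m) d = fa m d + fc m d" using Suc by (simp add: cntF_Suc succs_A)
  have b: "cntF B (Suc m) d = fa m d + fc m d" using Suc by (simp add: cntF_Suc succs_B)
  have c: "cntF C (Suc m) d = (if 1 \<le> d then 2 * fa m (d-1) + 2 * fc m (d-1) else 0)" using Suc by (simp add: cntF_Suc succs_C)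
  have d: "cntF D (Suc m) d = (if 1 \<le> d then 2 * fa m (d-1) + 2 * fc m (d-1) else 0)" using Suc by (simp add: cntF_Suc succs_D)
  have fa_s: "fa m d + fc m d = fa (Suc m) d"
  proof (cases m)
    case 0 then show ?thesis by (simp add: fa_def fc_def)
  next
    case (Suc m')
    show ?thesis
    proof (cases d)
      case 0 then show ?thesis using Suc by (simp add: fa_def fc_def)
    next
      case (Suc d')
      then show ?thesis using \<open>m = Suc m'\<close> by (simp add: fa_def fc_def algebra_simps)
    qed
  qed
  have fc_s: "(if 1 \<le> d then 2 * fa m (d-1) + 2 * fc m (d-1) else 0) = fc (Suc m) d"
  proof (cases d)
    case 0 then show ?thesis by (simp add: fc_def)
  next
    case (Suc d')
    show ?thesis
    proof (cases m)
      case 0 then show ?thesis using Suc by (simp add: fa_def fc_def)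
    next
      case (Suc m')
      show ?thesis
      proof (cases d')
        case 0 then show ?thesis using \<open>d = Suc d'\<close> Suc by (simp add: fa_def fc_def)
      next
        case (Suc d'')
        then show ?thesis using \<open>d = Suc d'\<close> \<open>m = Suc m'\<close> by (simp add: fa_def fc_def algebra_simps)
      qed
    qed
  qed
  show ?case using a b c d fa_s fc_s by simp
qed

definition W :: "nat \<Rightarrow> nat \<Rightarrow> nat" where
  "W m d = card {u. admissible u \<and> length u = m \<and> dc u = d}"

lemma W_Suc: "W (Suc m) d = 2 ^ (d + 2) * (m choose d)"
proof -
  have eq: "{u. admissible u \<and> length u = Suc m \<and> dc u = d} =
     (\<Union>x\<in>{A,B,C,D}. (Cons x) ` {w. length w = m \<and> admissible (x # w) \<and> dc (x # w) = d})"
  proof (rule set_eqI)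
    fix u show "u \<in> {u. admissible u \<and> length u = Suc m \<and> dc u = d} \<longleftrightarrow>
      u \<in> (\<Union>x\<in>{A,B,C,D}. (Cons x) ` {w. length w = m \<and> admissible (x # w) \<and> dc (x # w) = d})"
    proof (cases u)
      case Nil then show ?thesis by auto
    next
      case (Cons a l) then show ?thesis by (cases a) auto
    qed
  qed
  have fin: "finite {w. length w = m \<and> admissible (x # w) \<and> dc (x # w) = d}" for x
    by (rule finite_subset[OF _ finite_len[of m]]) auto
  have "W (Suc m) d = (\<Sum>x\<in>{A,B,C,D}. card ((Cons x) ` {w. length w = m \<and> admissible (x # w) \<and> dc (x # w) = d}))"
    unfolding W_def eq by (rule card_UN_disjoint) (auto simp: fin)
  also have "\<dots> = (\<Sum>x\<in>{A,B,C,D}. cntF x m d)" by (simp add: card_image cntF_def)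
  also have "\<dots> = 2 * fa m d + 2 * fc m d" using cntF_closed[of m d] by simp
  also have "\<dots> = 2 ^ (d + 2) * (m choose d)"
  proof (cases m)
    case 0 then show ?thesis by (simp add: fa_def fc_def)
  next
    case (Suc m')
    show ?thesis
    proof (cases d)
      case 0 then show ?thesis using Suc by (simp add: fa_def fc_def)
    next
      case (Suc d') then show ?thesis using \<open>m = Suc m'\<close> by (simp add: fa_def fc_def algebra_simps)
    qed
  qed
  finally show ?thesis .
qed



lemma rank_bij:
  fixes S :: "'a set" and R :: "'a \<Rightarrow> 'a \<Rightarrow> bool"
  assumes fin: "finite S" and irr: "\<And>x. x \<in> S \<Longrightarrow> \<not> R x x"
    and tr: "\<And>x y z. x \<in> S \<Longrightarrow> y \<in> S \<Longrightarrow> z \<in> S \<Longrightarrow> R x y \<Longrightarrow> R y z \<Longrightarrow> R x z"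
    and tot: "\<And>x y. x \<in> S \<Longrightarrow> y \<in> S \<Longrightarrow> x \<noteq> y \<Longrightarrow> R x y \<or> R y x"
  shows "bij_betw (\<lambda>x. card {y\<in>S. R y x}) S {..<card S}"
proof -
  let ?f = "\<lambda>x. card {y\<in>S. R y x}"
  have lt: "?f x < ?f y" if "x \<in> S" "y \<in> S" "R x y" for x y
  proof (rule psubset_card_mono)
    show "finite {z\<in>S. R z y}" using fin by simp
    show "{z\<in>S. R z x} \<subset> {z\<in>S. R z y}"
    proof
      show "{z\<in>S. R z x} \<subseteq> {z\<in>S. R z y}" using tr that by blast
      show "{z\<in>S. R z x} \<noteq> {z\<in>S. R z y}" using that irr by blast
    qed
  qed
  have inj: "inj_on ?f S"
  proof (rule inj_onI)
    fix x y assume xy: "x \<in> S" "y \<in> S" "?f x = ?f y"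
    show "x = y"
    proof (rule ccontr)
      assume "x \<noteq> y"
      then have "R x y \<or> R y x" using tot xy by blast
      then show False using lt[of x y] lt[of y x] xy by auto
    qed
  qed
  have sub: "?f ` S \<subseteq> {..<card S}"
  proof
    fix n assume "n \<in> ?f ` S"
    then obtain x where x: "x \<in> S" "n = ?f x" by blast
    have "{y\<in>S. R y x} \<subset> S" using x irr by blast
    then have "?f x < card S" using fin by (simp add: psubset_card_mono)
    then show "n \<in> {..<card S}" using x by simp
  qed
  have "card (?f ` S) = card S" using inj by (simp add: card_image)
  then have "?f ` S = {..<card S}" using sub by (simp add: card_subset_eq)
  then show ?thesis using inj by (simp add: bij_betw_def)
qed

lemma bl_irr: "\<not> bin_less w w"
  unfolding bin_less_def using lexord_irreflexive[of "{(False, True)}" w] by auto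

lemma bl_trans: "bin_less x y \<Longrightarrow> bin_less y z \<Longrightarrow> bin_less x z"
proof -
  assume a: "bin_less x y" "bin_less y z"
  have t: "trans {(False, True)}" by (auto simp: trans_def)
  show ?thesis using a lexord_trans[OF _ _ t, of x y z] unfolding bin_less_def by auto
qed

lemma bl_tot: "x \<noteq> y \<Longrightarrow> bin_less x y \<or> bin_less y x"
proof -
  assume "x \<noteq> y"
  have "\<forall>a b. (a, b) \<in> {(False, True)} \<or> a = b \<or> (b, a) \<in> {(False, True)}" by auto
  from lexord_linear[OF this, of x y] \<open>x \<noteq> y\<close> show ?thesis unfolding bin_less_def by auto
qed

lemma bl_len: "bin_less z w \<Longrightarrow> length z \<le> length w"
  unfolding bin_less_def by auto

lemma bl_shorter: "length z < length w \<Longrightarrow> bin_less z w"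
  unfolding bin_less_def by simp

definition SL :: "nat \<Rightarrow> bool list set" where "SL L = {z. z \<noteq> [] \<and> length z \<le> L}"

lemma finite_blen: "finite {w::bool list. length w = m}"
  using finite_lists_length_eq[of "UNIV::bool set" m] by simp

lemma card_blen: "card {w::bool list. length w = m} = 2 ^ m"
  using card_lists_length_eq[of "UNIV::bool set" m] by simp

lemma SL_fin_card: "finite (SL L) \<and> card (SL L) = 2 ^ (L + 1) - 2"
proof (induction L)
  case 0
  have "SL 0 = {}" by (auto simp: SL_def)
  then show ?case by simp
next
  case (Suc L)
  have eq: "SL (Suc L) = SL L \<union> {w. length w = Suc L}" by (auto simp: SL_def)
  have disj: "SL L \<inter> {w. length w = Suc L} = {}" by (auto simp: SL_def)
  have "card (SL (Suc L)) = card (SL L) + card {w::bool list. length w = Suc L}"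
    unfolding eq using Suc disj finite_blen by (simp add: card_Un_disjoint)
  also have "\<dots> = 2 ^ (L + 1) - 2 + 2 ^ (Suc L)" using Suc card_blen by simp
  also have "\<dots> = 2 ^ (Suc L + 1) - 2"
  proof -
    have "(2::nat) ^ (L + 1) \<ge> 2" by (simp add: self_le_power)
    then show ?thesis by simp
  qed
  finally show ?case using Suc eq finite_blen by simp
qed

definition bpred :: "bool list \<Rightarrow> nat" where "bpred w = card {z. z \<noteq> [] \<and> bin_less z w}"

lemma bpred_SL: "w \<in> SL L \<Longrightarrow> bpred w = card {z \<in> SL L. bin_less z w}"
proof -
  assume "w \<in> SL L"
  then have "{z. z \<noteq> [] \<and> bin_less z w} = {z \<in> SL L. bin_less z w}"
    unfolding SL_def using bl_len by fastforce
  then show ?thesis by (simp add: bpred_def)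
qed

lemma bpred_bij: "bij_betw bpred (SL L) {..<card (SL L)}"
proof -
  have "bij_betw (\<lambda>x. card {y \<in> SL L. bin_less y x}) (SL L) {..<card (SL L)}"
  proof (rule rank_bij)
    show "finite (SL L)" using SL_fin_card by blast
    show "\<And>x. x \<in> SL L \<Longrightarrow> \<not> bin_less x x" using bl_irr by blast
    show "\<And>x y z. x \<in> SL L \<Longrightarrow> y \<in> SL L \<Longrightarrow> z \<in> SL L \<Longrightarrow> bin_less x y \<Longrightarrow> bin_less y z \<Longrightarrow> bin_less x z"
      using bl_trans by blast
    show "\<And>x y. x \<in> SL L \<Longrightarrow> y \<in> SL L \<Longrightarrow> x \<noteq> y \<Longrightarrow> bin_less x y \<or> bin_less y x"
      using bl_tot by blast
  qed
  moreover have "bij_betw bpred (SL L) {..<card (SL L)} = bij_betw (\<lambda>x. card {y \<in> SL L. bin_less y x}) (SL L) {..<card (SL L)}"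
    by (rule bij_betw_cong) (rule bpred_SL)
  ultimately show ?thesis by simp
qed

lemma bpred_ex1: "\<exists>!w. w \<noteq> [] \<and> bpred w = r"
proof -
  have "r < 2 ^ (r + 1 + 1) - 2"
  proof -
    have "r + 1 < 2 ^ (r + 1)" by (rule less_exp)
    then show ?thesis by simp
  qed
  then have "r \<in> {..<card (SL (r + 1))}" using SL_fin_card by simp
  moreover have "bpred ` SL (r + 1) = {..<card (SL (r + 1))}" using bpred_bij[of "r+1"] by (simp add: bij_betw_def)
  ultimately have "r \<in> bpred ` SL (r + 1)" by simp
  then obtain w where w: "w \<in> SL (r + 1)" "bpred w = r" by blast
  show ?thesis
  proof (rule ex1I[of _ w])
    show "w \<noteq> [] \<and> bpred w = r" using w by (simp add: SL_def)
    fix w' assume w': "w' \<noteq> [] \<and> bpred w' = r"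
    let ?L = "max (length w) (length w')"
    have "w \<in> SL ?L" "w' \<in> SL ?L" using w w' by (auto simp: SL_def)
    moreover have "inj_on bpred (SL ?L)" using bpred_bij[of ?L] by (simp add: bij_betw_def)
    moreover have "bpred w' = bpred w" using w w' by simp
    ultimately show "w' = w" by (meson inj_onD)
  qed
qed

lemma bpred_len: "w \<noteq> [] \<Longrightarrow> 2 ^ length w \<le> bpred w + 2 \<and> bpred w + 2 < 2 ^ (length w + 1)"
proof -
  assume ne: "w \<noteq> []"
  have fin: "finite {z. z \<noteq> [] \<and> bin_less z w}"
  proof (rule finite_subset)
    show "{z. z \<noteq> [] \<and> bin_less z w} \<subseteq> SL (length w)" unfolding SL_def using bl_len by blast
    show "finite (SL (length w))" using SL_fin_card by blast
  qed
  have "SL (length w - 1) \<subseteq> {z. z \<noteq> [] \<and> bin_less z w}"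
  proof
    fix z assume "z \<in> SL (length w - 1)"
    moreover have "length w \<ge> 1" using ne by (cases w) auto
    ultimately show "z \<in> {z. z \<noteq> [] \<and> bin_less z w}" unfolding SL_def using bl_shorter by auto
  qed
  then have "card (SL (length w - 1)) \<le> bpred w" unfolding bpred_def using fin by (simp add: card_mono)
  moreover have "length w - 1 + 1 = length w" using ne by (cases w) auto
  ultimately have lo: "2 ^ length w - 2 \<le> bpred w" using SL_fin_card[of "length w - 1"] by simp
  have "{z. z \<noteq> [] \<and> bin_less z w} \<subseteq> SL (length w) - {w}"
  proof
    fix z assume z: "z \<in> {z. z \<noteq> [] \<and> bin_less z w}"
    then have "z \<noteq> w" using bl_irr by auto
    moreover have "length z \<le> length w" using z bl_len by blast
    ultimately show "z \<in> SL (length w) - {w}" using z by (simp add: SL_def)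
  qed
  then have "bpred w \<le> card (SL (length w) - {w})" unfolding bpred_def
    using SL_fin_card by (simp add: card_mono)
  also have "\<dots> = card (SL (length w)) - 1"
  proof -
    have "w \<in> SL (length w)" using ne by (simp add: SL_def)
    then show ?thesis using SL_fin_card[of "length w"] by (simp add: card_Diff_singleton)
  qed
  finally have hi: "bpred w \<le> 2 ^ (length w + 1) - 2 - 1" using SL_fin_card[of "length w"] by simp
  have "length w \<ge> 1" using ne by (cases w) auto
  then have "(2::nat) ^ 1 \<le> 2 ^ length w" by (rule power_increasing) simp
  then have p2: "(2::nat) ^ length w \<ge> 2" by simp
  have "(2::nat) ^ (length w + 1) = 2 * 2 ^ length w" by simp
  then show ?thesis using lo hi p2 by linarith
qed

definition rk :: "sym list \<Rightarrow> nat" where "rk u = card {v. admissible v \<and> src_less v u}"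

lemma code_spec: "code u \<noteq> [] \<and> bpred (code u) = rk u"
proof -
  have "code u = (THE w. w \<noteq> [] \<and> bpred w = rk u)"
    unfolding code_def bpred_def rk_def by simp
  then show ?thesis using theI'[OF bpred_ex1[of "rk u"]] by simp
qed

lemma code_len: "2 ^ length (code u) \<le> rk u + 2 \<and> rk u + 2 < 2 ^ (length (code u) + 1)"
proof -
  have h1: "code u \<noteq> []" and h2: "bpred (code u) = rk u" using code_spec[of u] by auto
  show ?thesis using bpred_len[OF h1] unfolding h2 .
qed

lemma len_unique:
  assumes "2 ^ l \<le> (r::nat) + 2" "r + 2 < 2 ^ (l + 1)" "k \<ge> 1" "2 ^ (k - 1) \<le> r + 2" "r + 2 < 2 ^ (k + 1)"
  shows "l = (if r + 2 < 2 ^ k then k - 1 else k)"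
proof -
  have "l < k + 1"
  proof (rule ccontr)
    assume "\<not> l < k + 1"
    then have "k + 1 \<le> l" by simp
    then have "(2::nat) ^ (k + 1) \<le> 2 ^ l" by (rule power_increasing) simp
    then show False using assms by linarith
  qed
  moreover have "k - 1 < l + 1"
  proof (rule ccontr)
    assume "\<not> k - 1 < l + 1"
    then have "l + 1 \<le> k - 1" by simp
    then have "(2::nat) ^ (l + 1) \<le> 2 ^ (k - 1)" by (rule power_increasing) simp
    then show False using assms by linarith
  qed
  ultimately have "l = k - 1 \<or> l = k" by linarith
  moreover have "l = k - 1 \<Longrightarrow> r + 2 < 2 ^ k" using assms by simp
  moreover have "l = k \<Longrightarrow> \<not> r + 2 < 2 ^ k" using assms by simp
  ultimately show ?thesis by auto
qed

lemma code_len_eq: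
  assumes "k \<ge> 1" "2 ^ (k - 1) \<le> rk u + 2" "rk u + 2 < 2 ^ (k + 1)"
  shows "length (code u) = (if rk u + 2 < 2 ^ k then k - 1 else k)"
  using len_unique[OF code_len[THEN conjunct1] code_len[THEN conjunct2] assms] .



definition cls :: "sym list \<Rightarrow> nat" where "cls v = length v + 1 + dc v"

definition Wn :: "nat \<Rightarrow> nat \<Rightarrow> nat" where
  "Wn m d = (if m = 0 then 0 else 2 ^ (d + 2) * ((m - 1) choose d))"

definition Qn :: "nat \<Rightarrow> nat \<Rightarrow> nat" where
  "Qn j n = (\<Sum>m\<in>{..n}. if m < j then Wn m (j - Suc m) else 0)"

lemma finite_le: "finite {v::sym list. length v \<le> m}"
  using finite_lists_length_le[OF finite_sym, of m] by simp

lemma W_gen: "card {v. admissible v \<and> length v = m \<and> dc v = d} = Wn m d"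
proof (cases m)
  case 0
  then have "{v. admissible v \<and> length v = m \<and> dc v = d} = {}" by (auto simp: admissible_def)
  then show ?thesis using 0 by (simp add: Wn_def)
next
  case (Suc m')
  then show ?thesis using W_Suc[of m' d] by (simp add: W_def Wn_def)
qed

lemma card_cls_le: "card {v. admissible v \<and> cls v = j \<and> length v \<le> n} = Qn j n"
proof -
  define Pc where "Pc m = {v. admissible v \<and> length v = m \<and> cls v = j}" for m
  have eq: "{v. admissible v \<and> cls v = j \<and> length v \<le> n} = (\<Union>m\<in>{..n}. Pc m)"
    by (auto simp: Pc_def)
  have fin: "finite (Pc m)" for m
    by (rule finite_subset[OF _ finite_le[of m]]) (auto simp: Pc_def)
  have "card (\<Union>m\<in>{..n}. Pc m) = (\<Sum>m\<in>{..n}. card (Pc m))"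
    by (intro card_UN_disjoint) (simp_all add: fin, auto simp: Pc_def)
  also have "\<dots> = Qn j n" unfolding Qn_def
  proof (rule sum.cong)
    fix m assume "m \<in> {..n}"
    show "card (Pc m) = (if m < j then Wn m (j - Suc m) else 0)"
    proof (cases "m < j")
      case True
      then have "Pc m = {v. admissible v \<and> length v = m \<and> dc v = j - Suc m}"
        by (auto simp: Pc_def cls_def)
      then show ?thesis using True W_gen by simp
    next
      case False
      then have "Pc m = {}" by (auto simp: Pc_def cls_def)
      then show ?thesis using False by simp
    qed
  qed simp
  finally show ?thesis unfolding eq .
qed

lemma finite_cls_lt: "finite {v. admissible v \<and> cls v < k}"
  by (rule finite_subset[OF _ finite_le[of k]]) (auto simp: cls_def)

lemma card_Lt: "card {v. admissible v \<and> cls v < k} = (\<Sum>j<k. Qn j j)"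
proof -
  define Pc where "Pc j = {v. admissible v \<and> cls v = j \<and> length v \<le> j}" for j
  have eq: "{v. admissible v \<and> cls v < k} = (\<Union>j\<in>{..<k}. Pc j)"
    by (auto simp: Pc_def cls_def)
  have fin: "finite (Pc j)" for j
    by (rule finite_subset[OF _ finite_le[of j]]) (auto simp: Pc_def)
  have "card (\<Union>j\<in>{..<k}. Pc j) = (\<Sum>j<k. card (Pc j))"
    by (intro card_UN_disjoint) (simp_all add: fin, auto simp: Pc_def)
  also have "\<dots> = (\<Sum>j<k. Qn j j)" unfolding Pc_def card_cls_le ..
  finally show ?thesis unfolding eq .
qed

definition lexl :: "sym list \<Rightarrow> sym list \<Rightarrow> bool" where
  "lexl v w \<longleftrightarrow> (v, w) \<in> lexord {(a, b). sym_idx a < sym_idx b}"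

lemma lexl_irr: "\<not> lexl w w"
  unfolding lexl_def by (rule lexord_irreflexive) simp

lemma lexl_trans: "lexl x y \<Longrightarrow> lexl y z \<Longrightarrow> lexl x z"
proof -
  assume a: "lexl x y" "lexl y z"
  have t: "trans {(a, b). sym_idx a < sym_idx b}" by (auto simp: trans_def)
  show ?thesis using a lexord_trans[OF _ _ t, of x y z] unfolding lexl_def by blast
qed

lemma sym_idx_inj: "sym_idx a = sym_idx b \<Longrightarrow> a = b"
  by (cases a; cases b; simp add: sym_idx_def)

lemma lexl_tot: "x \<noteq> y \<Longrightarrow> lexl x y \<or> lexl y x"
proof -
  assume "x \<noteq> y"
  have "\<forall>a b. (a, b) \<in> {(a, b). sym_idx a < sym_idx b} \<or> a = b \<or> (b, a) \<in> {(a, b). sym_idx a < sym_idx b}"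
    using sym_idx_inj by (auto simp: not_less_iff_gr_or_eq)
  from lexord_linear[OF this, of x y] \<open>x \<noteq> y\<close> show ?thesis unfolding lexl_def by blast
qed

definition Blk :: "nat \<Rightarrow> nat \<Rightarrow> sym list set" where
  "Blk n d = {v. admissible v \<and> length v = n \<and> dc v = d}"

lemma finite_Blk: "finite (Blk n d)"
  by (rule finite_subset[OF _ finite_le[of n]]) (auto simp: Blk_def)

definition lr :: "nat \<Rightarrow> nat \<Rightarrow> sym list \<Rightarrow> nat" where
  "lr n d u = card {v \<in> Blk n d. lexl v u}"

lemma lr_bij: "bij_betw (lr n d) (Blk n d) {..<card (Blk n d)}"
proof -
  have "bij_betw (\<lambda>x. card {y \<in> Blk n d. lexl y x}) (Blk n d) {..<card (Blk n d)}"
  proof (rule rank_bij)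
    show "finite (Blk n d)" by (rule finite_Blk)
    show "\<And>x. x \<in> Blk n d \<Longrightarrow> \<not> lexl x x" using lexl_irr by blast
    show "\<And>x y z. x \<in> Blk n d \<Longrightarrow> y \<in> Blk n d \<Longrightarrow> z \<in> Blk n d \<Longrightarrow> lexl x y \<Longrightarrow> lexl y z \<Longrightarrow> lexl x z"
      using lexl_trans by blast
    show "\<And>x y. x \<in> Blk n d \<Longrightarrow> y \<in> Blk n d \<Longrightarrow> x \<noteq> y \<Longrightarrow> lexl x y \<or> lexl y x"
      using lexl_tot by blast
  qed
  then show ?thesis unfolding lr_def .
qed

lemma rk_decomp:
  assumes u: "u \<in> Blk n d" and n: "n \<ge> 1"
  shows "rk u = (\<Sum>j<n+1+d. Qn j j) + Qn (n+1+d) (n-1) + lr n d u"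
proof -
  have adm: "admissible u" and ln: "length u = n" and du: "dc u = d" using u by (auto simp: Blk_def)
  have Ku: "K u = real (n + 1 + d)" using K_eq[OF adm] ln du by simp
  define A1 where "A1 = {v. admissible v \<and> cls v < n+1+d}"
  define A2 where "A2 = {v. admissible v \<and> cls v = n+1+d \<and> length v \<le> n - 1}"
  define A3 where "A3 = {v \<in> Blk n d. lexl v u}"
  have eq: "{v. admissible v \<and> src_less v u} = A1 \<union> A2 \<union> A3"
  proof (rule set_eqI)
    fix v
    show "v \<in> {v. admissible v \<and> src_less v u} \<longleftrightarrow> v \<in> A1 \<union> A2 \<union> A3"
    proof (cases "admissible v")
      case False then show ?thesis by (simp add: A1_def A2_def A3_def Blk_def)
    next
      case True
      have Kv: "K v = real (cls v)" using K_eq[OF True] by (simp add: cls_def)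
      have "src_less v u \<longleftrightarrow> cls v < n+1+d \<or> (cls v = n+1+d \<and> (length v < n \<or> (length v = n \<and> lexl v u)))"
        unfolding src_less_def Kv Ku ln lexl_def of_nat_less_iff of_nat_eq_iff by simp
      moreover have "cls v = n+1+d \<and> length v = n \<longleftrightarrow> length v = n \<and> dc v = d" by (auto simp: cls_def)
      ultimately show ?thesis using True n by (auto simp: A1_def A2_def A3_def Blk_def)
    qed
  qed
  have f1: "finite A1" unfolding A1_def by (rule finite_cls_lt)
  have f2: "finite A2" unfolding A2_def by (rule finite_subset[OF _ finite_le[of n]]) auto
  have f3: "finite A3" unfolding A3_def using finite_Blk by simp
  have d12: "A1 \<inter> A2 = {}" by (auto simp: A1_def A2_def)
  have d123: "(A1 \<union> A2) \<inter> A3 = {}" using n by (auto simp: A1_def A2_def A3_def Blk_def cls_def)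
  have "rk u = card (A1 \<union> A2 \<union> A3)" unfolding rk_def eq ..
  also have "\<dots> = card (A1 \<union> A2) + card A3" using f1 f2 f3 d123 by (simp add: card_Un_disjoint)
  also have "\<dots> = card A1 + card A2 + card A3" using f1 f2 d12 by (simp add: card_Un_disjoint)
  also have "card A1 = (\<Sum>j<n+1+d. Qn j j)" unfolding A1_def by (rule card_Lt)
  also have "card A2 = Qn (n+1+d) (n-1)" unfolding A2_def by (rule card_cls_le)
  also have "card A3 = lr n d u" unfolding A3_def lr_def ..
  finally show ?thesis .
qed



definition sv :: "nat \<Rightarrow> nat \<Rightarrow> nat" where
  "sv n d = (\<Sum>j<n+1+d. Qn j j) + Qn (n+1+d) (n-1)"

lemma sum_len:
  assumes "k \<ge> 1"
  shows "(\<Sum>i<N. real (if s + i + 2 < 2 ^ k then k - 1 else k)) = real k * real N - real (min N (2 ^ k - (s + 2)))"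
proof (induction N)
  case 0 then show ?case by simp
next
  case (Suc N)
  have "(\<Sum>i<Suc N. real (if s + i + 2 < 2 ^ k then k - 1 else k)) =
        real k * real N - real (min N (2 ^ k - (s + 2))) + real (if s + N + 2 < 2 ^ k then k - 1 else k)"
    using Suc by simp
  also have "\<dots> = real k * real (Suc N) - real (min (Suc N) (2 ^ k - (s + 2)))"
  proof (cases "s + N + 2 < 2 ^ k")
    case True
    then have "min (Suc N) (2 ^ k - (s + 2)) = Suc N" "min N (2 ^ k - (s + 2)) = N" by auto
    then show ?thesis using True assms by (simp add: of_nat_diff algebra_simps)
  next
    case False
    then have "min (Suc N) (2 ^ k - (s + 2)) = min N (2 ^ k - (s + 2))" by auto
    then show ?thesis using False by (simp add: algebra_simps)
  qed
  finally show ?case .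
qed

lemma dc_lt: "u \<noteq> [] \<Longrightarrow> dc u < length u"
proof -
  assume "u \<noteq> []"
  have "dc u \<le> length (butlast u)" unfolding dc_def by (rule length_filter_le)
  moreover have "length (butlast u) = length u - 1" by simp
  moreover have "length u \<ge> 1" using \<open>u \<noteq> []\<close> by (cases u) auto
  ultimately show ?thesis by linarith
qed

lemma expected_formula:
  assumes n: "n \<ge> 1"
    and bnd: "\<And>d. d < n \<Longrightarrow> 2 ^ (n + d) \<le> sv n d + 2 \<and> sv n d + Wn n d + 1 < 2 ^ (n + d + 2)"
  shows "expected_len n = (\<Sum>d<n. (1/2) ^ (n+1+d) * (real (n+1+d) * real (Wn n d) - real (min (Wn n d) (2 ^ (n+1+d) - (sv n d + 2)))))"
proof -
  define S where "S = {u::sym list. length u = n}"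
  have finS: "finite S" unfolding S_def by (rule finite_len)
  define f where "f d u = (if admissible u \<and> dc u = d then (1/2::real) ^ (n+1+d) * real (length (code u)) else 0)" for d u
  have step1: "str_prob u * real (length (code u)) = (\<Sum>d<n. f d u)" if "u \<in> S" for u
  proof -
    have ne: "u \<noteq> []" and ln: "length u = n" using that n by (auto simp: S_def)
    show ?thesis
    proof (cases "admissible u")
      case False
      then show ?thesis using str_prob_eq[OF ne] by (simp add: f_def)
    next
      case True
      have "dc u < n" using dc_lt[OF ne] ln by simp
      then have "(\<Sum>d<n. f d u) = f (dc u) u"
        by (subst sum.remove[of _ "dc u"]) (auto simp: f_def)
      then show ?thesis using str_prob_eq[OF ne] True ln \<open>dc u < n\<close> by (simp add: f_def)
    qed
  qed
  have "expected_len n = (\<Sum>u\<in>S. \<Sum>d<n. f d u)"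
    unfolding expected_len_def S_def[symmetric] using step1 by (rule sum.cong[OF refl])
  also have "\<dots> = (\<Sum>d<n. \<Sum>u\<in>S. f d u)" by (rule sum.swap)
  also have "\<dots> = (\<Sum>d<n. \<Sum>u\<in>Blk n d. (1/2) ^ (n+1+d) * real (length (code u)))"
  proof (rule sum.cong[OF refl])
    fix d
    have be: "Blk n d = {u \<in> S. admissible u \<and> dc u = d}" by (auto simp: Blk_def S_def)
    show "(\<Sum>u\<in>S. f d u) = (\<Sum>u\<in>Blk n d. (1/2) ^ (n+1+d) * real (length (code u)))"
      unfolding be sum.inter_filter[OF finS] f_def ..
  qed
  also have "\<dots> = (\<Sum>d<n. (1/2) ^ (n+1+d) * (real (n+1+d) * real (Wn n d) - real (min (Wn n d) (2 ^ (n+1+d) - (sv n d + 2)))))"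
  proof (rule sum.cong[OF refl])
    fix d assume "d \<in> {..<n}"
    then have bd: "2 ^ (n + d) \<le> sv n d + 2" "sv n d + Wn n d + 1 < 2 ^ (n + d + 2)" using bnd by auto
    define k where "k = n + 1 + d"
    have cardB: "card (Blk n d) = Wn n d" unfolding Blk_def by (rule W_gen)
    have len: "length (code u) = (if sv n d + lr n d u + 2 < 2 ^ k then k - 1 else k)" if u: "u \<in> Blk n d" for u
    proof -
      have rk: "rk u = sv n d + lr n d u" using rk_decomp[OF u n] by (simp add: sv_def)
      have "lr n d u < Wn n d" using lr_bij[of n d] u cardB by (auto simp: bij_betw_def)
      then have "2 ^ (k - 1) \<le> rk u + 2" "rk u + 2 < 2 ^ (k + 1)" using bd rk by (auto simp: k_def)
      then show ?thesis using code_len_eq[of k u] rk by (simp add: k_def)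
    qed
    have "(\<Sum>u\<in>Blk n d. real (length (code u))) = (\<Sum>u\<in>Blk n d. real (if sv n d + lr n d u + 2 < 2 ^ k then k - 1 else k))"
      using len by simp
    also have "\<dots> = (\<Sum>i<card (Blk n d). real (if sv n d + i + 2 < 2 ^ k then k - 1 else k))"
      by (rule sum.reindex_bij_betw[OF lr_bij])
    also have "\<dots> = real k * real (Wn n d) - real (min (Wn n d) (2 ^ k - (sv n d + 2)))"
      unfolding cardB by (rule sum_len) (simp add: k_def)
    finally have E: "(\<Sum>u\<in>Blk n d. real (length (code u))) = real (n+1+d) * real (Wn n d) - real (min (Wn n d) (2 ^ (n+1+d) - (sv n d + 2)))"
      unfolding k_def .
    have "(\<Sum>u\<in>Blk n d. (1/2) ^ (n+1+d) * real (length (code u))) = (1/2) ^ (n+1+d) * (\<Sum>u\<in>Blk n d. real (length (code u)))"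
      by (rule sum_distrib_left[symmetric])
    then show "(\<Sum>u\<in>Blk n d. (1/2) ^ (n+1+d) * real (length (code u))) =
       (1/2) ^ (n+1+d) * (real (n+1+d) * real (Wn n d) - real (min (Wn n d) (2 ^ (n+1+d) - (sv n d + 2))))"
      unfolding E .
  qed
  finally show ?thesis .
qed



definition Bt :: "nat \<Rightarrow> nat \<Rightarrow> nat" where
  "Bt j m = (if m < j then Wn m (j - Suc m) else 0)"

lemma Qn_0: "Qn j 0 = 0" by (simp add: Qn_def Wn_def)

lemma Qn_Suc: "Qn j (Suc n) = Qn j n + Bt j (Suc n)"
  by (simp add: Qn_def Bt_def)

lemma Bt_rec: "Bt (Suc (Suc (Suc i))) (Suc (Suc n)) = Bt (Suc (Suc i)) (Suc n) + 2 * Bt (Suc i) (Suc n)"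
proof (cases "n \<le> i")
  case False
  then show ?thesis by (simp add: Bt_def)
next
  case True
  then obtain d where i: "i = n + d" using le_Suc_ex by blast
  show ?thesis
  proof (cases d)
    case 0 then show ?thesis using i by (simp add: Bt_def Wn_def)
  next
    case (Suc d')
    have e1: "Bt (Suc (Suc (Suc i))) (Suc (Suc n)) = 2 ^ (Suc d' + 2) * (Suc n choose Suc d')" using i Suc by (simp add: Bt_def Wn_def)
    have e2: "(Suc n choose Suc d') = (n choose d') + (n choose Suc d')" by simp
    have e3: "Bt (Suc (Suc i)) (Suc n) = 2 ^ (Suc d' + 2) * (n choose Suc d')" using i Suc by (simp add: Bt_def Wn_def)
    have e4: "Bt (Suc i) (Suc n) = 2 ^ (d' + 2) * (n choose d')" using i Suc by (simp add: Bt_def Wn_def)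
    show ?thesis unfolding e1 e3 e4 e2 by (simp add: algebra_simps)
  qed
qed

lemma QP: "Qn (Suc (Suc (Suc i))) (Suc n) = Qn (Suc (Suc i)) n + 2 * Qn (Suc i) n"
proof (induction n)
  case 0 then show ?case by (simp add: Qn_Suc Qn_0 Bt_def Wn_def)
next
  case (Suc n)
  have "Qn (Suc (Suc (Suc i))) (Suc (Suc n)) = Qn (Suc (Suc (Suc i))) (Suc n) + Bt (Suc (Suc (Suc i))) (Suc (Suc n))" by (rule Qn_Suc)
  also have "\<dots> = Qn (Suc (Suc i)) (Suc n) + 2 * Qn (Suc i) (Suc n)" using Suc Bt_rec[of i n] by (simp add: Qn_Suc)
  finally show ?case .
qed

definition Tn :: "nat \<Rightarrow> nat" where "Tn j = Qn j j"

lemma Qn_big: "j \<le> n \<Longrightarrow> Qn j n = Tn j"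
proof (induction n)
  case 0 then show ?case by (simp add: Tn_def)
next
  case (Suc n)
  show ?case
  proof (cases "j \<le> n")
    case True then show ?thesis using Suc by (simp add: Qn_Suc Bt_def)
  next
    case False then have "j = Suc n" using Suc by simp
    then show ?thesis by (simp add: Tn_def)
  qed
qed

lemma Qn_mono: "n \<le> n' \<Longrightarrow> Qn j n \<le> Qn j n'"
  unfolding Qn_def by (rule sum_mono2) auto

lemma Qn_le_Tn: "Qn j n \<le> Tn j"
proof (cases "j \<le> n")
  case True then show ?thesis by (simp add: Qn_big)
next
  case False then show ?thesis using Qn_mono[of n j j] by (simp add: Tn_def)
qed

lemma T_rec: "Tn (Suc (Suc (Suc i))) = Tn (Suc (Suc i)) + 2 * Tn (Suc i)"
proof -
  have "Tn (Suc (Suc (Suc i))) = Qn (Suc (Suc (Suc i))) (Suc (Suc (Suc i)))" by (simp add: Tn_def)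
  also have "\<dots> = Qn (Suc (Suc i)) (Suc (Suc i)) + 2 * Qn (Suc i) (Suc (Suc i))" by (rule QP)
  also have "Qn (Suc i) (Suc (Suc i)) = Tn (Suc i)" by (rule Qn_big) simp
  finally show ?thesis by (simp add: Tn_def)
qed

lemma T_1: "Tn (Suc 0) = 0" by (simp add: Tn_def Qn_def Wn_def)
lemma T_2: "Tn (Suc (Suc 0)) = 4" by (simp add: Tn_def Qn_Suc Qn_0 Bt_def Wn_def)

lemma T_sum: "Tn (Suc i) + Tn (Suc (Suc i)) = 2 ^ (i+2)"
proof (induction i)
  case 0 then show ?case by (simp add: T_1 T_2)
next
  case (Suc i)
  have "Tn (Suc (Suc i)) + Tn (Suc (Suc (Suc i))) = Tn (Suc (Suc i)) + Tn (Suc (Suc i)) + 2 * Tn (Suc i)"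
    using T_rec[of i] by simp
  also have "\<dots> = 2 * (Tn (Suc i) + Tn (Suc (Suc i)))" by simp
  finally show ?case using Suc by simp
qed

lemma T_le: "Tn (Suc (Suc i)) \<le> 2 ^ (i+2)"
  using T_sum[of i] by simp

definition Mc :: "nat \<Rightarrow> nat" where "Mc k = (\<Sum>j<k. Tn j)"

lemma Mc_id: "2 * Mc (Suc i) + Tn (Suc i) + 4 = 2 ^ (i + 2)"
proof (induction i)
  case 0 then show ?case by (simp add: Mc_def T_1 Tn_def Qn_def Wn_def)
next
  case (Suc i)
  have "2 * Mc (Suc (Suc i)) + Tn (Suc (Suc i)) + 4 = (2 * Mc (Suc i) + Tn (Suc i) + 4) + Tn (Suc i) + Tn (Suc (Suc i))"
    by (simp add: Mc_def)
  also have "\<dots> = 2 ^ (i+2) + 2 ^ (i+2)" using Suc T_sum[of i] by simp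
  finally show ?case by simp
qed

lemma sum_atMost_last: "sum f {..c::nat} = sum f {..<c} + f c"
proof -
  have "{..c} = insert c {..<c}" by auto
  then show ?thesis by (simp add: add.commute)
qed

lemma partial_pascal: "(\<Sum>i\<le>c. Suc n choose i) = (\<Sum>i\<le>c. n choose i) + (\<Sum>i<c. n choose i)"
proof (induction c)
  case 0 then show ?case by simp
next
  case (Suc c)
  have a: "(\<Sum>i\<le>Suc c. Suc n choose i) = (\<Sum>i\<le>c. Suc n choose i) + (n choose c) + (n choose Suc c)" by simp
  have b: "(\<Sum>i<Suc c. n choose i) = (\<Sum>i\<le>c. n choose i)" by (simp add: lessThan_Suc_atMost)
  have c: "(\<Sum>i\<le>c. n choose i) = (\<Sum>i<c. n choose i) + (n choose c)" by (rule sum_atMost_last)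
  show ?case unfolding a b using Suc c by simp
qed

lemma Tel: "real (Qn (n+1+c) n) + real (Qn (n+2+c) n) = 2 ^ (n+2+c) - 2 ^ (c+2) * real (\<Sum>i\<le>c. n choose i)"
proof (induction n arbitrary: c)
  case 0
  have h: "(\<Sum>i\<le>c. (0::nat) choose i) = 1" by (induction c) simp_all
  show ?case unfolding h by (simp add: Qn_0)
next
  case (Suc n)
  have IH: "real (Qn (n+1+Suc c) n) + real (Qn (n+2+Suc c) n) = 2 ^ (n+2+Suc c) - 2 ^ (Suc c+2) * real (\<Sum>i\<le>Suc c. n choose i)"
    by (rule Suc.IH)
  have b1: "Bt (Suc n+1+c) (Suc n) = 2 ^ (c+2) * (n choose c)" by (simp add: Bt_def Wn_def)
  have b2: "Bt (Suc n+2+c) (Suc n) = 2 ^ (c+3) * (n choose Suc c)" by (simp add: Bt_def Wn_def power_add)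
  have q1: "Qn (Suc n+1+c) (Suc n) = Qn (n+1+Suc c) n + Bt (Suc n+1+c) (Suc n)" by (simp add: Qn_Suc)
  have q2: "Qn (Suc n+2+c) (Suc n) = Qn (n+2+Suc c) n + Bt (Suc n+2+c) (Suc n)" by (simp add: Qn_Suc)
  have pp: "real (\<Sum>i\<le>c. Suc n choose i) = real (\<Sum>i\<le>c. n choose i) + real (\<Sum>i<c. n choose i)"
    by (simp only: partial_pascal[of n c] of_nat_add)
  have s1: "real (\<Sum>i\<le>Suc c. n choose i) = real (\<Sum>i\<le>c. n choose i) + real (n choose Suc c)" by simp
  have s2: "real (\<Sum>i\<le>c. n choose i) = real (\<Sum>i<c. n choose i) + real (n choose c)"
    by (simp only: sum_atMost_last of_nat_add)
  have "real (Qn (Suc n+1+c) (Suc n)) + real (Qn (Suc n+2+c) (Suc n)) =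
     (2 ^ (n+2+Suc c) - 2 ^ (Suc c+2) * real (\<Sum>i\<le>Suc c. n choose i)) + 2 ^ (c+2) * real (n choose c) + 2 ^ (c+3) * real (n choose Suc c)"
    using IH q1 q2 b1 b2 by simp
  also have "\<dots> = 2 ^ (Suc n+2+c) - 2 ^ (c+2) * real (\<Sum>i\<le>c. Suc n choose i)"
    unfolding pp s1 using s2 by (simp add: algebra_simps power_add)
  finally show ?case .
qed



definition Hf :: "nat \<Rightarrow> nat \<Rightarrow> real" where
  "Hf n c = real (Tn (n+1+c)) / 2 - real (Qn (n+1+c) n)"

lemma H_pascal: "Hf (Suc n) (Suc c) = Hf n (Suc c) + 2 * Hf n c"
proof -
  have i1: "Suc n + 1 + Suc c = Suc (Suc (Suc (n+c)))" by simp
  have i2: "n + 1 + Suc c = Suc (Suc (n+c))" by simp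
  have i3: "n + 1 + c = Suc (n+c)" by simp
  have t: "Tn (Suc (Suc (Suc (n+c)))) = Tn (Suc (Suc (n+c))) + 2 * Tn (Suc (n+c))" by (rule T_rec)
  have q: "Qn (Suc (Suc (Suc (n+c)))) (Suc n) = Qn (Suc (Suc (n+c))) n + 2 * Qn (Suc (n+c)) n" by (rule QP)
  show ?thesis unfolding Hf_def i1 i2 i3 t q by (simp add: algebra_simps)
qed

lemma H_sum: "Hf n c + Hf n (Suc c) = 2 ^ (c+2) * real (\<Sum>i\<le>c. n choose i) - 2 ^ (n+1+c)"
proof -
  have tel: "real (Qn (n+1+c) n) + real (Qn (n+2+c) n) = 2 ^ (n+2+c) - 2 ^ (c+2) * real (\<Sum>i\<le>c. n choose i)"
    by (rule Tel)
  have ts: "Tn (Suc (n+c)) + Tn (Suc (Suc (n+c))) = 2 ^ (n+c+2)" by (rule T_sum)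
  have i1: "n + 1 + Suc c = n + 2 + c" by simp
  have i2: "n + 1 + c = Suc (n+c)" "n + 2 + c = Suc (Suc (n+c))" by simp_all
  have ts': "real (Tn (Suc (n+c))) + real (Tn (Suc (Suc (n+c)))) = 2 ^ (n+c+2)"
    using ts by (metis of_nat_add of_nat_numeral of_nat_power)
  have "Hf n c + Hf n (Suc c) = (real (Tn (Suc (n+c))) + real (Tn (Suc (Suc (n+c))))) / 2
       - (real (Qn (n+1+c) n) + real (Qn (n+2+c) n))"
    unfolding Hf_def i1 unfolding i2 by (simp add: algebra_simps)
  also have "\<dots> = 2 ^ (n+c+2) / 2 - (2 ^ (n+2+c) - 2 ^ (c+2) * real (\<Sum>i\<le>c. n choose i))"
    unfolding ts' tel ..
  also have "\<dots> = 2 ^ (c+2) * real (\<Sum>i\<le>c. n choose i) - 2 ^ (n+1+c)"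
    by (simp add: power_add algebra_simps)
  finally show ?thesis .
qed

lemma HS_odd: "(\<Sum>i\<le>j. (2*j+1) choose i) = 4 ^ j"
  using binomial_r_part_sum[of j] by (simp add: power_mult)

lemma HS_even: "2 * (\<Sum>i\<le>j. (2*j) choose i) = 4 ^ j + ((2*j) choose j)"
proof -
  have "(\<Sum>i\<le>j. Suc (2*j) choose i) = (\<Sum>i\<le>j. (2*j) choose i) + (\<Sum>i<j. (2*j) choose i)"
    by (rule partial_pascal)
  moreover have "(\<Sum>i\<le>j. (2*j) choose i) = (\<Sum>i<j. (2*j) choose i) + ((2*j) choose j)"
    by (rule sum_atMost_last)
  moreover have "(\<Sum>i\<le>j. Suc (2*j) choose i) = 4 ^ j" using HS_odd[of j] by simp
  ultimately show ?thesis by simp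
qed

lemma diag_a: "Hf (2*j) j + Hf (2*j) (Suc j) = 2 ^ (j+1) * real ((2*j) choose j)"
proof -
  have "Hf (2*j) j + Hf (2*j) (Suc j) = 2 ^ (j+2) * real (\<Sum>i\<le>j. (2*j) choose i) - 2 ^ (2*j+1+j)"
    by (rule H_sum)
  also have "real (\<Sum>i\<le>j. (2*j) choose i) = (4 ^ j + real ((2*j) choose j)) / 2"
  proof -
    have "real (2 * (\<Sum>i\<le>j. (2*j) choose i)) = real (4 ^ j + ((2*j) choose j))" using HS_even[of j] by simp
    then show ?thesis by simp
  qed
  also have "(2::real) ^ (2*j+1+j) = 2 ^ (j+1) * 4 ^ j"
  proof -
    have f: "(2::real) ^ (2*j) = 4 ^ j" by (simp add: power_mult)
    have g: "2*j+1+j = (j+1) + 2*j" by simp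
    show ?thesis by (simp only: g power_add f)
  qed
  finally show ?thesis by (simp add: power_add algebra_simps)
qed

lemma diag_b: "Hf (2*j+1) (Suc j) + Hf (2*j+1) (Suc (Suc j)) = 2 ^ (j+3) * real ((2*j+1) choose (Suc j))"
proof -
  have "Hf (2*j+1) (Suc j) + Hf (2*j+1) (Suc (Suc j)) = 2 ^ (Suc j+2) * real (\<Sum>i\<le>Suc j. (2*j+1) choose i) - 2 ^ (2*j+1+1+Suc j)"
    by (rule H_sum)
  also have "real (\<Sum>i\<le>Suc j. (2*j+1) choose i) = 4 ^ j + real ((2*j+1) choose (Suc j))"
    using HS_odd[of j] by simp
  also have "(2::real) ^ (2*j+1+1+Suc j) = 2 ^ (j+3) * 4 ^ j"
  proof -
    have f: "(2::real) ^ (2*j) = 4 ^ j" by (simp add: power_mult)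
    have g: "2*j+1+1+Suc j = (j+3) + 2*j" by simp
    show ?thesis by (simp only: g power_add f)
  qed
  finally show ?thesis by (simp add: power_add algebra_simps)
qed

lemma H_0_1: "Hf 0 (Suc 0) = 2"
  by (simp add: Hf_def Qn_0 T_2)

lemma C_sym: "(2*j+1) choose j = (2*j+1) choose (Suc j)"
  using binomial_symmetric[of j "2*j+1"] by simp

lemma C_next: "(2*(Suc j)) choose (Suc j) = 2 * ((2*j+1) choose (Suc j))"
proof -
  have "(2*(Suc j)) choose (Suc j) = Suc (2*j+1) choose Suc j" by simp
  also have "\<dots> = ((2*j+1) choose j) + ((2*j+1) choose Suc j)" by (rule binomial_Suc_Suc)
  finally show ?thesis using C_sym by simp
qed

lemma C_mono: "(2*j) choose j \<le> (2*j+1) choose (Suc j)"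
proof -
  have "(2*j+1) choose (Suc j) = ((2*j) choose j) + ((2*j) choose Suc j)" by simp
  then show ?thesis by simp
qed

lemma C_pos: "(2*j) choose j \<ge> 1"
  by (simp add: Suc_leI)

lemma diag: "\<exists>e. Hf (2*j) (Suc j) = 2 ^ (j+1) * (real ((2*j) choose j) + e) \<and> 0 \<le> e \<and> 2 * e \<le> real ((2*j) choose j) \<and> (j \<ge> 1 \<longrightarrow> 0 < e)"
proof (induction j)
  case 0
  show ?case by (rule exI[of _ 0]) (simp add: H_0_1)
next
  case (Suc j)
  then obtain e where e: "Hf (2*j) (Suc j) = 2 ^ (j+1) * (real ((2*j) choose j) + e)" "0 \<le> e" "2 * e \<le> real ((2*j) choose j)"
    by blast
  define Cj where "Cj = real ((2*j) choose j)"
  define C' where "C' = real ((2*j+1) choose (Suc j))"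
  have h0: "Hf (2*j) j = -(2 ^ (j+1) * e)" using diag_a[of j] e(1) unfolding Cj_def by (simp add: algebra_simps)
  have h1: "Hf (2*j+1) (Suc j) = 2 ^ (j+1) * (Cj - e)"
    using H_pascal[of "2*j" j] h0 e(1) unfolding Cj_def by (simp add: algebra_simps)
  have h2: "Hf (2*j+1) (Suc (Suc j)) = 2 ^ (j+3) * C' - 2 ^ (j+1) * (Cj - e)"
    using diag_b[of j] h1 unfolding C'_def by (simp add: algebra_simps)
  have h3: "Hf (2*Suc j) (Suc (Suc j)) = Hf (2*j+1) (Suc (Suc j)) + 2 * Hf (2*j+1) (Suc j)"
    using H_pascal[of "2*j+1" "Suc j"] by simp
  have cn: "real ((2 * Suc j) choose Suc j) = 2 * C'" unfolding C'_def using C_next[of j] by simp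
  have cm: "Cj \<le> C'" unfolding Cj_def C'_def using C_mono[of j] by simp
  have cp: "Cj \<ge> 1" unfolding Cj_def using C_pos[of j] by simp
  show ?case
  proof (rule exI[of _ "(Cj - e) / 2"], intro conjI impI)
    show "Hf (2 * Suc j) (Suc (Suc j)) = 2 ^ (Suc j + 1) * (real ((2 * Suc j) choose Suc j) + (Cj - e) / 2)"
      unfolding h3 h2 h1 cn by (simp add: power_add field_simps)
    show "0 \<le> (Cj - e) / 2" using e(3) cp unfolding Cj_def by simp
    show "2 * ((Cj - e) / 2) \<le> real ((2 * Suc j) choose Suc j)" unfolding cn using cm e(2) cp by simp
    show "0 < (Cj - e) / 2" using e(3) cp unfolding Cj_def by simp
  qed
qed



lemma diag_full: "\<exists>e. 0 \<le> e \<and> 2 * e \<le> real ((2*j) choose j) \<and> (j \<ge> 1 \<longrightarrow> 0 < e) \<and>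
   Hf (2*j) (Suc j) = 2 ^ (j+1) * (real ((2*j) choose j) + e) \<and>
   Hf (2*j+1) (Suc j) = 2 ^ (j+1) * (real ((2*j) choose j) - e) \<and>
   Hf (2*j+1) (Suc (Suc j)) = 2 ^ (j+3) * real ((2*j+1) choose (Suc j)) - 2 ^ (j+1) * (real ((2*j) choose j) - e)"
proof -
  obtain e where e: "Hf (2*j) (Suc j) = 2 ^ (j+1) * (real ((2*j) choose j) + e)" "0 \<le> e" "2 * e \<le> real ((2*j) choose j)" "j \<ge> 1 \<longrightarrow> 0 < e"
    using diag[of j] by blast
  define Cj where "Cj = real ((2*j) choose j)"
  define C' where "C' = real ((2*j+1) choose (Suc j))"
  have h0: "Hf (2*j) j = -(2 ^ (j+1) * e)" using diag_a[of j] e(1) unfolding Cj_def by (simp add: algebra_simps)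
  have h1: "Hf (2*j+1) (Suc j) = 2 ^ (j+1) * (Cj - e)"
    using H_pascal[of "2*j" j] h0 e(1) unfolding Cj_def by (simp add: algebra_simps)
  have h2: "Hf (2*j+1) (Suc (Suc j)) = 2 ^ (j+3) * C' - 2 ^ (j+1) * (Cj - e)"
    using diag_b[of j] h1 unfolding C'_def by (simp add: algebra_simps)
  show ?thesis
    apply (rule exI[of _ e])
    using e h1 h2 unfolding Cj_def C'_def by simp
qed

lemma F1: "n div 2 + 1 \<le> c \<Longrightarrow> 0 \<le> Hf n c"
proof (induction n arbitrary: c)
  case 0
  then show ?case by (simp add: Hf_def Qn_0)
next
  case (Suc n)
  obtain c' where c: "c = Suc c'" using Suc.prems by (cases c) auto
  show ?case
  proof (cases "even n \<and> c' = n div 2")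
    case True
    then obtain j where j: "n = 2*j" "c' = j" by auto
    obtain e where e: "0 \<le> e" "2 * e \<le> real ((2*j) choose j)"
      "Hf (2*j+1) (Suc j) = 2 ^ (j+1) * (real ((2*j) choose j) - e)"
      using diag_full[of j] by blast
    have "0 \<le> 2 ^ (j+1) * (real ((2*j) choose j) - e)" using e(1,2) by simp
    then show ?thesis using e(3) j c by simp
  next
    case False
    have a: "n div 2 + 1 \<le> Suc c'" using Suc.prems c by simp
    have b: "n div 2 + 1 \<le> c'" using Suc.prems c False by auto
    have "Hf (Suc n) (Suc c') = Hf n (Suc c') + 2 * Hf n c'" by (rule H_pascal)
    then show ?thesis using Suc.IH[OF a] Suc.IH[OF b] c by simp
  qed
qed

lemma Wn_Suc: "Wn (Suc m) d = 2 ^ (d+2) * (m choose d)"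
  by (simp add: Wn_def)

lemma L_x: "d < Suc m \<Longrightarrow> 2 ^ (Suc m+1+d) - real (sv (Suc m) d) - 2 = Hf m (Suc d)"
proof -
  assume "d < Suc m"
  have mc: "2 * Mc (Suc (m+d+1)) + Tn (Suc (m+d+1)) + 4 = 2 ^ (m+d+1+2)" by (rule Mc_id)
  have mc': "2 * real (Mc (Suc (m+d+1))) + real (Tn (Suc (m+d+1))) + 4 = 2 ^ (m+d+1+2)"
    using arg_cong[OF mc, of real] by simp
  have sv: "sv (Suc m) d = Mc (Suc (m+d+1)) + Qn (Suc (m+d+1)) m"
    by (simp add: sv_def Mc_def Tn_def)
  have i: "m + 1 + Suc d = Suc (m+d+1)" by simp
  have p: "(2::real) ^ (m+d+1+2) = 2 * 2 ^ (Suc m+1+d)" by simp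
  show ?thesis unfolding Hf_def sv i using mc' p by (simp add: algebra_simps)
qed

lemma L_N: "d < Suc m \<Longrightarrow> Hf m (Suc d) - real (Wn (Suc m) d) = Hf (Suc m) d"
proof -
  assume d: "d < Suc m"
  have i: "m + 1 + Suc d = Suc m + 1 + d" by simp
  have q: "Qn (Suc m + 1 + d) (Suc m) = Qn (Suc m + 1 + d) m + Bt (Suc m + 1 + d) (Suc m)" by (rule Qn_Suc)
  have b: "Bt (Suc m + 1 + d) (Suc m) = Wn (Suc m) d" by (simp add: Bt_def)
  show ?thesis unfolding Hf_def i q b by simp
qed

lemma L_bounds:
  assumes "d < Suc m"
  shows "2 ^ (Suc m + d) \<le> sv (Suc m) d + 2 \<and> sv (Suc m) d + Wn (Suc m) d + 1 < 2 ^ (Suc m + d + 2)"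
proof -
  define k where "k = Suc m + 1 + d"
  have x: "2 ^ k - real (sv (Suc m) d) - 2 = Hf m (Suc d)" using L_x[OF assms] by (simp add: k_def)
  have hn: "Hf m (Suc d) - real (Wn (Suc m) d) = Hf (Suc m) d" using L_N[OF assms] .
  have tk: "real (Tn k) \<le> 2 ^ (m + d + 2)"
  proof -
    have "Tn (Suc (Suc (m+d))) \<le> 2 ^ (m+d+2)" by (rule T_le)
    moreover have "k = Suc (Suc (m+d))" by (simp add: k_def)
    ultimately have "Tn k \<le> 2 ^ (m+d+2)" by simp
    then have "real (Tn k) \<le> real ((2::nat) ^ (m+d+2))" by (simp only: of_nat_le_iff)
    then show ?thesis by simp
  qed
  have hm: "Hf m (Suc d) \<le> real (Tn k) / 2" unfolding Hf_def by (simp add: k_def)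
  have hs: "Hf (Suc m) d \<ge> - real (Tn k)"
  proof -
    have "Qn k (Suc m) \<le> Tn k" by (rule Qn_le_Tn)
    then have "real (Qn k (Suc m)) \<le> real (Tn k)" by simp
    then show ?thesis unfolding Hf_def by (simp add: k_def)
  qed
  have p1: "(2::real) ^ k = 2 * 2 ^ (m+d+1)" by (simp add: k_def)
  have p2: "(2::real) ^ (m+d+2) = 2 * 2 ^ (m+d+1)" by simp
  have r1: "real (2 ^ (Suc m + d)) \<le> real (sv (Suc m) d + 2)"
    using x hm tk p1 p2 by simp
  have r2: "real (sv (Suc m) d + Wn (Suc m) d + 1) < real (2 ^ (Suc m + d + 2))"
    using x hn hs tk p1 p2 by simp
  show ?thesis using r1 r2 by (simp only: of_nat_le_iff of_nat_less_iff)
qed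



definition G :: "nat \<Rightarrow> nat \<Rightarrow> real" where
  "G m d = (1/2) ^ (Suc m + 1 + d) * min (real (Wn (Suc m) d)) (max 0 (Hf m (Suc d)))"

lemma half_pow: "(1/2::real) ^ (a + b) * 2 ^ b = (1/2) ^ a"
proof -
  have "(1/2::real) ^ b * 2 ^ b = 1" by (simp add: power_mult_distrib[symmetric])
  then show ?thesis by (simp add: power_add mult.assoc)
qed

lemma weight: "(1/2::real) ^ (Suc m + 1 + d) * real (Wn (Suc m) d) = (1/2) ^ m * real (m choose d)"
proof -
  have "(1/2::real) ^ (Suc m + 1 + d) * real (Wn (Suc m) d) = ((1/2) ^ (m + (d+2)) * 2 ^ (d+2)) * real (m choose d)"
    by (simp add: Wn_Suc mult.assoc algebra_simps)
  also have "\<dots> = (1/2) ^ m * real (m choose d)" by (simp only: half_pow)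
  finally show ?thesis .
qed

lemma row_sum_lt: "(\<Sum>d<Suc m. real (m choose d)) = 2 ^ m"
proof -
  have "(\<Sum>d<Suc m. m choose d) = 2 ^ m" using choose_row_sum[of m] by (simp add: lessThan_Suc_atMost)
  then have "real (\<Sum>d<Suc m. m choose d) = 2 ^ m" by simp
  then show ?thesis by simp
qed

lemma lin_sum_lt: "(\<Sum>d<Suc m. real d * real (m choose d)) * 2 = real m * 2 ^ m"
proof -
  have "(\<Sum>d<Suc m. d * (m choose d)) = m * 2 ^ (m - 1)" using choose_linear_sum[of m] by (simp add: lessThan_Suc_atMost)
  then have "(\<Sum>d<Suc m. real d * real (m choose d)) = real m * 2 ^ (m - 1)"
    by (metis (mono_tags, lifting) of_nat_mult of_nat_numeral of_nat_power of_nat_sum sum.cong)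
  moreover have "real m * 2 ^ (m - 1) * 2 = real m * 2 ^ m" by (cases m) auto
  ultimately show ?thesis by simp
qed

lemma part1: "(\<Sum>d<Suc m. (1/2) ^ (Suc m + 1 + d) * (real (Suc m + 1 + d) * real (Wn (Suc m) d))) = (3 * real (Suc m) + 1) / 2"
proof -
  have "(\<Sum>d<Suc m. (1/2) ^ (Suc m + 1 + d) * (real (Suc m + 1 + d) * real (Wn (Suc m) d))) =
        (\<Sum>d<Suc m. real (Suc m + 1 + d) * ((1/2) ^ (Suc m + 1 + d) * real (Wn (Suc m) d)))"
    by (rule sum.cong[OF refl]) (rule mult.left_commute)
  also have "\<dots> = (\<Sum>d<Suc m. real (Suc m + 1 + d) * ((1/2) ^ m * real (m choose d)))"
    by (simp only: weight)
  also have "\<dots> = (1/2) ^ m * ((real m + 2) * (\<Sum>d<Suc m. real (m choose d)) + (\<Sum>d<Suc m. real d * real (m choose d)))"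
    by (simp add: sum_distrib_left sum.distrib algebra_simps)
  also have "\<dots> = (1/2) ^ m * ((real m + 2) * 2 ^ m + real m * 2 ^ m / 2)"
  proof -
    have r2: "(\<Sum>d<Suc m. real d * real (m choose d)) = real m * 2 ^ m / 2" using lin_sum_lt[of m] by simp
    show ?thesis by (simp only: r2 row_sum_lt)
  qed
  also have "\<dots> = ((1/2) ^ m * 2 ^ m) * (real m + 2 + real m / 2)" by (simp add: algebra_simps)
  also have "(1/2::real) ^ m * 2 ^ m = 1" by (simp add: power_mult_distrib[symmetric])
  finally show ?thesis by simp
qed

lemma term_conv:
  assumes d: "d < Suc m"
  shows "real (min (Wn (Suc m) d) (2 ^ (Suc m+1+d) - (sv (Suc m) d + 2))) = min (real (Wn (Suc m) d)) (max 0 (Hf m (Suc d)))"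
proof -
  have x: "2 ^ (Suc m+1+d) - real (sv (Suc m) d) - 2 = Hf m (Suc d)" by (rule L_x[OF d])
  have "real ((2::nat) ^ (Suc m+1+d) - (sv (Suc m) d + 2)) = max 0 (Hf m (Suc d))"
  proof (cases "sv (Suc m) d + 2 \<le> 2 ^ (Suc m+1+d)")
    case True
    then have "real ((2::nat) ^ (Suc m+1+d) - (sv (Suc m) d + 2)) = 2 ^ (Suc m+1+d) - real (sv (Suc m) d) - 2"
      by (simp add: of_nat_diff)
    then show ?thesis using x by simp
  next
    case False
    then have "real (sv (Suc m) d + 2) > real ((2::nat) ^ (Suc m+1+d))" by (simp only: of_nat_less_iff not_le)
    then have "Hf m (Suc d) < 0" using x by simp
    then show ?thesis using False by simp
  qed
  then show ?thesis by (simp add: of_nat_min)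
qed

lemma E_form: "expected_len (Suc m) = (3 * real (Suc m) + 1) / 2 - (\<Sum>d<Suc m. G m d)"
proof -
  have "expected_len (Suc m) = (\<Sum>d<Suc m. (1/2) ^ (Suc m+1+d) * (real (Suc m+1+d) * real (Wn (Suc m) d) -
        real (min (Wn (Suc m) d) (2 ^ (Suc m+1+d) - (sv (Suc m) d + 2)))))"
  proof (rule expected_formula)
    show "Suc m \<ge> 1" by simp
    fix d assume "d < Suc m"
    then show "2 ^ (Suc m + d) \<le> sv (Suc m) d + 2 \<and> sv (Suc m) d + Wn (Suc m) d + 1 < 2 ^ (Suc m + d + 2)"
      by (rule L_bounds)
  qed
  also have "\<dots> = (\<Sum>d<Suc m. (1/2) ^ (Suc m+1+d) * (real (Suc m+1+d) * real (Wn (Suc m) d)) - G m d)"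
  proof (rule sum.cong[OF refl])
    fix d assume "d \<in> {..<Suc m}"
    then have "d < Suc m" by simp
    then show "(1/2) ^ (Suc m+1+d) * (real (Suc m+1+d) * real (Wn (Suc m) d) -
        real (min (Wn (Suc m) d) (2 ^ (Suc m+1+d) - (sv (Suc m) d + 2)))) =
        (1/2) ^ (Suc m+1+d) * (real (Suc m+1+d) * real (Wn (Suc m) d)) - G m d"
      unfolding G_def term_conv[OF \<open>d < Suc m\<close>] by (simp add: right_diff_distrib)
  qed
  also have "\<dots> = (3 * real (Suc m) + 1) / 2 - (\<Sum>d<Suc m. G m d)"
    by (simp only: sum_subtractf part1)
  finally show ?thesis .
qed



lemma G_nonneg: "0 \<le> G m d"
  unfolding G_def by simp

lemma G_full: "d < Suc m \<Longrightarrow> 0 \<le> Hf (Suc m) d \<Longrightarrow> G m d = (1/2) ^ m * real (m choose d)"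
proof -
  assume d: "d < Suc m" and h: "0 \<le> Hf (Suc m) d"
  have "Hf m (Suc d) = real (Wn (Suc m) d) + Hf (Suc m) d" using L_N[OF d] by simp
  then have mn: "min (real (Wn (Suc m) d)) (max 0 (Hf m (Suc d))) = real (Wn (Suc m) d)" using h by simp
  show ?thesis unfolding G_def mn by (rule weight)
qed

lemma G_part: "0 \<le> Hf m (Suc d) \<Longrightarrow> Hf m (Suc d) \<le> real (Wn (Suc m) d) \<Longrightarrow> G m d = (1/2) ^ (Suc m + 1 + d) * Hf m (Suc d)"
  unfolding G_def by simp

lemma sum_tail_ge: "(\<And>d. 0 \<le> f d) \<Longrightarrow> sum f {a..<n} \<le> sum (f::nat \<Rightarrow> real) {..<n}"
  by (rule sum_mono2) auto

lemma sum_tail_binom: "a \<le> Suc m \<Longrightarrow> (\<Sum>d\<in>{a..<Suc m}. real (m choose d)) = 2 ^ m - (\<Sum>d<a. real (m choose d))"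
proof -
  assume a: "a \<le> Suc m"
  have "(\<Sum>d\<in>{0..<a}. real (m choose d)) + (\<Sum>d\<in>{a..<Suc m}. real (m choose d)) = (\<Sum>d\<in>{0..<Suc m}. real (m choose d))"
    using a by (intro sum.atLeastLessThan_concat) auto
  then show ?thesis using row_sum_lt[of m] by (simp add: atLeast0LessThan)
qed

lemma pow4: "(1/2::real) ^ (2*j) * 4 ^ j = 1"
proof -
  have "(1/2::real) ^ (2*j) = (1/4) ^ j" by (simp add: power_mult power2_eq_square)
  then show ?thesis by (simp add: power_mult_distrib[symmetric])
qed

lemma X_odd: "\<exists>e. 0 \<le> e \<and> (j \<ge> 1 \<longrightarrow> 0 < e) \<and> (\<Sum>d<Suc (2*j). G (2*j) d) \<ge> 1/2 + (1/2) ^ (2*j) / 2 * e"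
proof -
  obtain e where e: "0 \<le> e" "2 * e \<le> real ((2*j) choose j)" "j \<ge> 1 \<longrightarrow> 0 < e"
     "Hf (2*j) (Suc j) = 2 ^ (j+1) * (real ((2*j) choose j) + e)"
    using diag_full[of j] by blast
  define Cj where "Cj = real ((2*j) choose j)"
  define p where "p = (1/2::real) ^ (2*j)"
  have cp: "Cj \<ge> 1" unfolding Cj_def using C_pos[of j] by simp
  have Gj: "G (2*j) j = p / 2 * (Cj + e)"
  proof -
    have x0: "0 \<le> Hf (2*j) (Suc j)" using e(1) cp unfolding e(4) Cj_def[symmetric] by simp
    have xN: "Hf (2*j) (Suc j) \<le> real (Wn (Suc (2*j)) j)"
      using e(2) cp unfolding e(4) Cj_def[symmetric] Wn_Suc by (simp add: Cj_def power_add)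
    have "G (2*j) j = (1/2) ^ (Suc (2*j) + 1 + j) * (2 ^ (j+1) * (Cj + e))"
      using G_part[OF x0 xN] unfolding e(4) Cj_def .
    also have "\<dots> = ((1/2) ^ ((2*j+1) + (j+1)) * 2 ^ (j+1)) * (Cj + e)" by (simp add: mult.assoc)
    also have "\<dots> = (1/2) ^ (2*j+1) * (Cj + e)" by (simp only: half_pow)
    finally show ?thesis by (simp add: p_def)
  qed
  have Grest: "(\<Sum>d\<in>{Suc j..<Suc (2*j)}. G (2*j) d) = p * (\<Sum>d\<in>{Suc j..<Suc (2*j)}. real ((2*j) choose d))"
  proof -
    have "(\<Sum>d\<in>{Suc j..<Suc (2*j)}. G (2*j) d) = (\<Sum>d\<in>{Suc j..<Suc (2*j)}. p * real ((2*j) choose d))"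
    proof (rule sum.cong[OF refl])
      fix d assume d: "d \<in> {Suc j..<Suc (2*j)}"
      have "0 \<le> Hf (Suc (2*j)) d" by (rule F1) (use d in auto)
      then show "G (2*j) d = p * real ((2*j) choose d)" using d G_full[of d "2*j"] by (simp add: p_def)
    qed
    then show ?thesis by (simp only: sum_distrib_left)
  qed
  have bs: "(\<Sum>d\<in>{Suc j..<Suc (2*j)}. real ((2*j) choose d)) = 4 ^ j - (4 ^ j + Cj) / 2"
  proof -
    have "(\<Sum>d\<in>{Suc j..<Suc (2*j)}. real ((2*j) choose d)) = 2 ^ (2*j) - (\<Sum>d<Suc j. real ((2*j) choose d))"
      by (rule sum_tail_binom) simp
    also have "(\<Sum>d<Suc j. real ((2*j) choose d)) = (4 ^ j + Cj) / 2"
    proof -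
      have "real (2 * (\<Sum>i\<le>j. (2*j) choose i)) = real (4 ^ j + ((2*j) choose j))" using HS_even[of j] by simp
      then show ?thesis unfolding Cj_def by (simp add: lessThan_Suc_atMost)
    qed
    also have "(2::real) ^ (2*j) = 4 ^ j" by (simp add: power_mult)
    finally show ?thesis .
  qed
  have "(\<Sum>d<Suc (2*j). G (2*j) d) \<ge> (\<Sum>d\<in>{j..<Suc (2*j)}. G (2*j) d)"
    by (rule sum_tail_ge) (rule G_nonneg)
  also have "(\<Sum>d\<in>{j..<Suc (2*j)}. G (2*j) d) = G (2*j) j + (\<Sum>d\<in>{Suc j..<Suc (2*j)}. G (2*j) d)"
    by (rule sum.atLeast_Suc_lessThan) simp
  also have "\<dots> = p / 2 * (Cj + e) + p * (4 ^ j - (4 ^ j + Cj) / 2)" unfolding Gj Grest bs ..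
  also have "\<dots> = (p * 4 ^ j) / 2 + p / 2 * e" by (simp add: field_simps)
  also have "p * 4 ^ j = 1" unfolding p_def by (rule pow4)
  finally show ?thesis using e(1) e(3) unfolding p_def by (intro exI[of _ e]) simp
qed

lemma X_even: "(\<Sum>d<Suc (2*j+1). G (2*j+1) d) > 1/2"
proof -
  obtain e where e: "0 \<le> e" "2 * e \<le> real ((2*j) choose j)"
     "Hf (2*j+1) (Suc j) = 2 ^ (j+1) * (real ((2*j) choose j) - e)"
     "Hf (2*j+1) (Suc (Suc j)) = 2 ^ (j+3) * real ((2*j+1) choose (Suc j)) - 2 ^ (j+1) * (real ((2*j) choose j) - e)"
    using diag_full[of j] by blast
  define Cj where "Cj = real ((2*j) choose j)"
  define C' where "C' = real ((2*j+1) choose (Suc j))"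
  define p where "p = (1/2::real) ^ (2*j)"
  have cp: "Cj \<ge> 1" unfolding Cj_def using C_pos[of j] by simp
  have cm: "Cj \<le> C'" unfolding Cj_def C'_def using C_mono[of j] by simp
  have e3: "Hf (2*j+1) (Suc j) = 2 ^ (j+1) * (Cj - e)" using e(3) unfolding Cj_def .
  have e4: "Hf (2*j+1) (Suc (Suc j)) = 2 ^ (j+3) * C' - 2 ^ (j+1) * (Cj - e)" using e(4) unfolding Cj_def C'_def .
  have w1: "real (Wn (Suc (2*j+1)) j) = 2 ^ (j+2) * C'" unfolding Wn_Suc C'_def using C_sym[of j] by simp
  have w2: "real (Wn (Suc (2*j+1)) (Suc j)) = 2 ^ (j+3) * C'" unfolding Wn_Suc C'_def by (simp add: power_add)
  have Gj: "G (2*j+1) j = p / 4 * (Cj - e)"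
  proof -
    have x0: "0 \<le> Hf (2*j+1) (Suc j)" using e(1,2) cp unfolding e3 Cj_def by simp
    have xN: "Hf (2*j+1) (Suc j) \<le> real (Wn (Suc (2*j+1)) j)"
    proof -
      have "(2::real) ^ (j+1) * (Cj - e) \<le> 2 ^ (j+1) * (2 * C')" using e(1) cm cp by simp
      then show ?thesis unfolding e3 w1 by (simp add: power_add)
    qed
    have "G (2*j+1) j = (1/2) ^ (Suc (2*j+1) + 1 + j) * (2 ^ (j+1) * (Cj - e))"
      using G_part[OF x0 xN] unfolding e3 .
    also have "\<dots> = ((1/2) ^ ((2*j+2) + (j+1)) * 2 ^ (j+1)) * (Cj - e)" by (simp add: mult.assoc)
    also have "\<dots> = (1/2) ^ (2*j+2) * (Cj - e)" by (simp only: half_pow)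
    finally show ?thesis by (simp add: p_def power_add)
  qed
  have Gj1: "G (2*j+1) (Suc j) = p / 2 * C' - p / 8 * (Cj - e)"
  proof -
    have x0: "0 \<le> Hf (2*j+1) (Suc (Suc j))"
    proof -
      have "(2::real) ^ (j+1) * (Cj - e) \<le> 2 ^ (j+1) * (4 * C')" using e(1) cm cp by simp
      then show ?thesis unfolding e4 by (simp add: power_add)
    qed
    have xN: "Hf (2*j+1) (Suc (Suc j)) \<le> real (Wn (Suc (2*j+1)) (Suc j))"
      unfolding e4 w2 using e(1,2) cp unfolding Cj_def by simp
    have "G (2*j+1) (Suc j) = (1/2) ^ (Suc (2*j+1) + 1 + Suc j) * (2 ^ (j+3) * C' - 2 ^ (j+1) * (Cj - e))"
      using G_part[OF x0 xN] unfolding e4 .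
    also have "\<dots> = ((1/2) ^ (Suc (2*j+1) + 1 + Suc j) * 2 ^ (j+3)) * C' - ((1/2) ^ (Suc (2*j+1) + 1 + Suc j) * 2 ^ (j+1)) * (Cj - e)"
      by (simp only: right_diff_distrib mult.assoc)
    also have "(1/2::real) ^ (Suc (2*j+1) + 1 + Suc j) * 2 ^ (j+3) = (1/2) ^ (2*j+1)"
    proof -
      have i1: "Suc (2*j+1) + 1 + Suc j = (2*j+1) + (j+3)" by simp
      show ?thesis unfolding i1 by (rule half_pow)
    qed
    also have "(1/2::real) ^ (Suc (2*j+1) + 1 + Suc j) * 2 ^ (j+1) = (1/2) ^ (2*j+3)"
    proof -
      have i2: "Suc (2*j+1) + 1 + Suc j = (2*j+3) + (j+1)" by simp
      show ?thesis unfolding i2 by (rule half_pow)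
    qed
    finally show ?thesis by (simp add: p_def power_add eval_nat_numeral)
  qed
  have Grest: "(\<Sum>d\<in>{Suc (Suc j)..<Suc (2*j+1)}. G (2*j+1) d) = p / 2 * (\<Sum>d\<in>{Suc (Suc j)..<Suc (2*j+1)}. real ((2*j+1) choose d))"
  proof -
    have "(\<Sum>d\<in>{Suc (Suc j)..<Suc (2*j+1)}. G (2*j+1) d) = (\<Sum>d\<in>{Suc (Suc j)..<Suc (2*j+1)}. p / 2 * real ((2*j+1) choose d))"
    proof (rule sum.cong[OF refl])
      fix d assume d: "d \<in> {Suc (Suc j)..<Suc (2*j+1)}"
      have "0 \<le> Hf (Suc (2*j+1)) d" by (rule F1) (use d in auto)
      then show "G (2*j+1) d = p / 2 * real ((2*j+1) choose d)" using d G_full[of d "2*j+1"] by (simp add: p_def)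
    qed
    then show ?thesis by (simp only: sum_distrib_left)
  qed
  have bs: "(\<Sum>d\<in>{Suc (Suc j)..<Suc (2*j+1)}. real ((2*j+1) choose d)) = 4 ^ j - C'"
  proof -
    have "(\<Sum>d\<in>{Suc (Suc j)..<Suc (2*j+1)}. real ((2*j+1) choose d)) = 2 ^ (2*j+1) - (\<Sum>d<Suc (Suc j). real ((2*j+1) choose d))"
      by (rule sum_tail_binom) simp
    also have "(\<Sum>d<Suc (Suc j). real ((2*j+1) choose d)) = 4 ^ j + C'"
    proof -
      have "real (\<Sum>i\<le>j. (2*j+1) choose i) = 4 ^ j" using HS_odd[of j] by simp
      then show ?thesis unfolding C'_def by (simp add: lessThan_Suc_atMost)
    qed
    also have "(2::real) ^ (2*j+1) = 2 * 4 ^ j" by (simp add: power_mult)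
    finally show ?thesis by simp
  qed
  have "(\<Sum>d<Suc (2*j+1). G (2*j+1) d) \<ge> (\<Sum>d\<in>{j..<Suc (2*j+1)}. G (2*j+1) d)"
    by (rule sum_tail_ge) (rule G_nonneg)
  also have "(\<Sum>d\<in>{j..<Suc (2*j+1)}. G (2*j+1) d) = G (2*j+1) j + (G (2*j+1) (Suc j) + (\<Sum>d\<in>{Suc (Suc j)..<Suc (2*j+1)}. G (2*j+1) d))"
  proof -
    have "(\<Sum>d\<in>{j..<Suc (2*j+1)}. G (2*j+1) d) = G (2*j+1) j + (\<Sum>d\<in>{Suc j..<Suc (2*j+1)}. G (2*j+1) d)"
      by (rule sum.atLeast_Suc_lessThan) simp
    also have "(\<Sum>d\<in>{Suc j..<Suc (2*j+1)}. G (2*j+1) d) = G (2*j+1) (Suc j) + (\<Sum>d\<in>{Suc (Suc j)..<Suc (2*j+1)}. G (2*j+1) d)"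
      by (rule sum.atLeast_Suc_lessThan) simp
    finally show ?thesis .
  qed
  also have "\<dots> = p / 4 * (Cj - e) + (p / 2 * C' - p / 8 * (Cj - e) + p / 2 * (4 ^ j - C'))" unfolding Gj Gj1 Grest bs ..
  also have "\<dots> = (p * 4 ^ j) / 2 + p / 8 * (Cj - e)" by (simp add: field_simps)
  also have "p * 4 ^ j = 1" unfolding p_def by (rule pow4)
  finally have "(\<Sum>d<Suc (2*j+1). G (2*j+1) d) \<ge> 1/2 + p / 8 * (Cj - e)" by simp
  moreover have "p / 8 * (Cj - e) > 0" using e(2) cp unfolding Cj_def p_def by simp
  ultimately show ?thesis by simp
qed

lemma X_one: "(\<Sum>d<Suc 0. G 0 d) = 1/2"
  by (simp add: G_def Wn_def H_0_1)

theorem main_result: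
  "\<forall>n::nat. n \<ge> 1 \<longrightarrow>
     expected_len n \<le> 3/2 * real n \<and> (expected_len n = 3/2 * real n \<longleftrightarrow> n = 1)"
proof (intro allI impI)
  fix n :: nat assume "n \<ge> 1"
  then obtain m where n: "n = Suc m" by (cases n) auto
  define X where "X = (\<Sum>d<Suc m. G m d)"
  have E: "expected_len n = (3 * real n + 1) / 2 - X" unfolding X_def n by (rule E_form)
  have X: "X \<ge> 1/2 \<and> (X = 1/2 \<longleftrightarrow> m = 0)"
  proof (cases "m = 0")
    case True then show ?thesis using X_one unfolding X_def by simp
  next
    case False
    show ?thesis
    proof (cases "even m")
      case True
      then obtain j where j: "m = 2*j" by auto
      then have "j \<ge> 1" using False by simp
      obtain e where e: "0 \<le> e" "j \<ge> 1 \<longrightarrow> 0 < e" "(\<Sum>d<Suc (2*j). G (2*j) d) \<ge> 1/2 + (1/2) ^ (2*j) / 2 * e"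
        using X_odd[of j] by blast
      have "(1/2::real) ^ (2*j) / 2 * e > 0" using e(2) \<open>j \<ge> 1\<close> by simp
      then have "X > 1/2" using e(3) j unfolding X_def by simp
      then show ?thesis using False by simp
    next
      case False
      then obtain j where j: "m = 2*j+1" by (metis oddE)
      have "X > 1/2" using X_even[of j] j unfolding X_def by simp
      then show ?thesis using j by simp
    qed
  qed
  have E': "expected_len n = 3/2 * real n + (1/2 - X)" using E by (simp add: field_simps)
  have le: "expected_len n \<le> 3/2 * real n" using E' X[THEN conjunct1] by linarith
  have eq: "expected_len n = 3/2 * real n \<longleftrightarrow> X = 1/2" using E' by linarith
  show "expected_len n \<le> 3/2 * real n \<and> (expected_len n = 3/2 * real n \<longleftrightarrow> n = 1)"
    using le eq X n by simp
qed


theorem mainTheorem13: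
  "\<forall>n::nat. n \<ge> 1 \<longrightarrow>
     expected_len n \<le> 3/2 * real n \<and> (expected_len n = 3/2 * real n \<longleftrightarrow> n = 1)"
  by (rule main_result)

end
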